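(* For integers $a,b\ge0$ let $c_{a,b}=c_{a,b}^{a+b+1}$. Then (1) $c_{a,b}\in\mathbb Z[\tfrac12]$; (2) $c_{a,b}-c_{b,a}\in2\mathbb Z$; (3) $\nu_2(c_{a+b,0})=\nu_2(c_{0,a+b})\le\nu_2(c_{a,b})\le0$.
   Context: For integers $a,b,r\ge0$, $c_{a,b}^r=2(-1)^r\Big(\binom{2r}{2b+2}-(1-2^{-2r})\binom{2r}{2a+1}\Big)$ (binomial coefficients $\binom nk=0$ if $k>n$). $\nu_2$ is the $2$-adic valuation on $\mathbb Q$, with $\nu_2(0)=\infty$. *)

theory Defs
  imports Complex_Main "HOL-Library.Extended_Real" "HOL-Computational_Algebra.Primes"
begin

text \<open>c^r_{a,b} = 2(-1)^r (binom(2r,2b+2) - (1 - 2^(-2r)) binom(2r,2a+1)), as a rational;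
  n choose k = 0 for k > n, as in the paper.\<close>
definition cr :: "nat \<Rightarrow> nat \<Rightarrow> nat \<Rightarrow> rat" where
  "cr r a b = 2 * (-1) ^ r * (of_nat ((2*r) choose (2*b+2))
      - (1 - 1 / 2 ^ (2*r)) * of_nat ((2*r) choose (2*a+1)))"

definition cab :: "nat \<Rightarrow> nat \<Rightarrow> rat" where
  "cab a b = cr (a + b + 1) a b"

definition nu2 :: "rat \<Rightarrow> ereal" where
  "nu2 q = (if q = 0 then \<infinity> else
     ereal (real_of_int (int (multiplicity (2::int) (fst (quotient_of q)))
                         - int (multiplicity (2::int) (snd (quotient_of q))))))"

definition Zhalf :: "rat set" where
  "Zhalf = {q. \<exists>m::int. \<exists>k::nat. q = of_int m / 2 ^ k}"

end

theory Submission
  imports Defs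
begin

lemma nu2_frac:
  fixes p d :: int
  assumes "p \<noteq> 0" "d \<noteq> 0"
  shows "nu2 (of_int p / of_int d) = ereal (real_of_int (int (multiplicity 2 p) - int (multiplicity 2 d)))"
proof -
  obtain p' d' where qd: "quotient_of (of_int p / of_int d) = (p', d')" by (cases "quotient_of (of_int p / of_int d)")
  have d'0: "d' > 0" using quotient_of_denom_pos[OF qd] .
  have eq: "(of_int p / of_int d :: rat) = of_int p' / of_int d'" using quotient_of_div[OF qd] .
  have nz: "(of_int p / of_int d :: rat) \<noteq> 0" using assms by simp
  hence p'0: "p' \<noteq> 0" using eq by auto
  have "(of_int (p * d') :: rat) = of_int (p' * d)" using eq assms d'0 by (simp add: field_simps)
  hence e2: "p * d' = p' * d" by (simp only: of_int_eq_iff)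
  have pr: "prime_elem (2::int)" by simp
  have "multiplicity 2 (p * d') = multiplicity 2 (p' * d)" using e2 by simp
  hence "multiplicity (2::int) p + multiplicity 2 d' = multiplicity 2 p' + multiplicity 2 d"
    using prime_elem_multiplicity_mult_distrib[OF pr] assms p'0 d'0 by simp
  thus ?thesis unfolding nu2_def using nz qd by simp
qed

lemma choose_lt_pow2:
  assumes "0 < k" "k \<le> n"
  shows "n choose k < 2 ^ n"
proof -
  have "(\<Sum>i\<in>{0,k}. n choose i) \<le> (\<Sum>i\<le>n. n choose i)"
    by (rule sum_mono2) (use assms in auto)
  thus ?thesis using assms choose_row_sum[of n] by simp
qed

lemma cab_eq:
  "cab a b = of_int (2*(-1)^(a+b+1)*((int ((2*(a+b+1)) choose (2*b+2)) - int ((2*(a+b+1)) choose (2*a+1)))*2^(2*(a+b+1))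
     + int ((2*(a+b+1)) choose (2*a+1)))) / of_int (2^(2*(a+b+1)))"
  unfolding cab_def cr_def by (simp add: field_simps)

lemma nu2_cab:
  fixes a b :: nat
  defines "n \<equiv> 2*(a+b+1)"
  defines "j \<equiv> multiplicity (2::int) (int (n choose (2*a+1)))"
  shows "nu2 (cab a b) = ereal (real_of_int (int j + 1 - int n)) \<and> j < n"
proof -
  define B1 where "B1 = int (n choose (2*a+1))"
  define B0 where "B0 = int (n choose (2*b+2))"
  have B1pos: "B1 > 0" unfolding B1_def n_def by (simp del: binomial_Suc_Suc add: zero_less_binomial)
  obtain u where u: "B1 = 2^j * u" "\<not> 2 dvd u"
  proof -
    have "B1 \<noteq> 0" "\<not> is_unit (2::int)" using B1pos by auto
    from multiplicity_decompose'[OF this] obtain y where "B1 = 2 ^ multiplicity 2 B1 * y" "\<not> 2 dvd y" by blast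
    thus ?thesis using that unfolding j_def B1_def by blast
  qed
  have "(2::int)^j \<le> B1" using u B1pos
  proof -
    have "(2::int)^j dvd B1" using u(1) by simp
    thus ?thesis using B1pos by (rule zdvd_imp_le)
  qed
  also have "B1 < 2^n"
  proof -
    have "n choose (2*a+1) < 2^n" by (rule choose_lt_pow2) (auto simp: n_def)
    hence "int (n choose (2*a+1)) < int (2^n)" by (simp only: of_nat_less_iff)
    thus ?thesis unfolding B1_def by simp
  qed
  finally have jn: "j < n" by simp
  define w where "w = (-1)^(a+b+1)*((B0 - B1)*2^(n-j) + u)"
  have wodd: "\<not> 2 dvd w" unfolding w_def using u(2) jn
    by (simp add: dvd_add_right_iff)
  have eqn: "2*(-1)^(a+b+1)*((B0 - B1)*2^n + B1) = 2^(j+1) * w"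
  proof -
    have "(2::int)^n = 2^j * 2^(n-j)" using jn by (simp flip: power_add)
    thus ?thesis unfolding w_def u(1) by (simp add: algebra_simps)
  qed
  have ce0: "cab a b = of_int (2*(-1)^(a+b+1)*((B0 - B1)*2^n + B1)) / of_int (2^n)"
    unfolding n_def B0_def B1_def by (rule cab_eq)
  have ce: "cab a b = of_int (2^(j+1) * w) / of_int (2^n)"
    using ce0 by (simp only: eqn)
  have w0: "w \<noteq> 0" using wodd by auto
  have m1: "multiplicity (2::int) (2^(j+1) * w) = j+1"
    by (rule multiplicity_decomposeI) (use wodd in auto)
  have m2: "multiplicity (2::int) (2^n) = n" by simp
  show ?thesis using jn ce nu2_frac[of "2^(j+1)*w" "2^n"] m1 m2 w0 by simp
qed

lemma mult_le:
  fixes a n :: nat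
  assumes "2*a+1 \<le> n"
  shows "multiplicity (2::int) (int n) \<le> multiplicity (2::int) (int (n choose (2*a+1)))"
proof -
  define m where "m = multiplicity (2::int) (int n)"
  have "(2*a+1) * (n choose (2*a+1)) = n * ((n - 1) choose (2*a))"
    using times_binomial_minus1_eq[of "2*a+1" n] by simp
  hence e: "int (2*a+1) * int (n choose (2*a+1)) = int n * int ((n - 1) choose (2*a))"
    by (metis of_nat_mult)
  have "(2::int)^m dvd int n" unfolding m_def by (rule multiplicity_dvd)
  hence "(2::int)^m dvd int (2*a+1) * int (n choose (2*a+1))" unfolding e by simp
  moreover have "coprime ((2::int)^m) (int (2*a+1))" by simp
  ultimately have d: "(2::int)^m dvd int (n choose (2*a+1))"
    using coprime_dvd_mult_right_iff by blast
  have "int (n choose (2*a+1)) \<noteq> 0" using assms by simp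
  moreover have "\<not> is_unit (2::int)" by simp
  ultimately show ?thesis unfolding m_def[symmetric] using multiplicity_geI d by blast
qed

lemma part2: "\<exists>m::int. cab a b - cab b a = of_int (2 * m)"
proof -
  define n where "n = 2*(a+b+1)"
  have sym: "n choose (2*b+1) = n choose (2*a+1)"
    using binomial_symmetric[of "2*b+1" n] unfolding n_def by (simp add: algebra_simps)
  define X where "X = n choose (2*b+2)"
  define Y where "Y = n choose (2*a+2)"
  define Z where "Z = n choose (2*a+1)"
  have ca: "cab a b = 2 * (-1)^(a+b+1) * (of_nat X - (1 - 1/2^n) * of_nat Z)"
    unfolding cab_def cr_def X_def Z_def n_def by simp
  have cb: "cab b a = 2 * (-1)^(a+b+1) * (of_nat Y - (1 - 1/2^n) * of_nat Z)"
  proof -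
    have "cab b a = 2*(-1)^(b+a+1)*(of_nat ((2*(b+a+1)) choose (2*a+2)) - (1-1/2^(2*(b+a+1)))*of_nat ((2*(b+a+1)) choose (2*b+1)))"
      by (simp only: cab_def cr_def)
    also have "b+a+1 = a+b+1" by simp
    finally show ?thesis unfolding n_def[symmetric] sym Y_def Z_def .
  qed
  show ?thesis
    by (rule exI[of _ "(-1)^(a+b+1) * (int X - int Y)"]) (simp add: ca cb algebra_simps)
qed

theorem mainTheorem9:
  fixes a b :: nat
  shows "cab a b \<in> Zhalf
    \<and> (\<exists>m::int. cab a b - cab b a = of_int (2 * m))
    \<and> nu2 (cab (a + b) 0) = nu2 (cab 0 (a + b))
    \<and> nu2 (cab 0 (a + b)) \<le> nu2 (cab a b)
    \<and> nu2 (cab a b) \<le> 0"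
proof -
  define n where "n = 2*(a+b+1)"
  have z: "cab a b \<in> Zhalf"
  proof -
    have "cab a b = of_int (2*(-1)^(a+b+1)*((int ((2*(a+b+1)) choose (2*b+2)) - int ((2*(a+b+1)) choose (2*a+1)))*2^(2*(a+b+1))
     + int ((2*(a+b+1)) choose (2*a+1)))) / 2^(2*(a+b+1))"
      using cab_eq[of a b] by (simp only: of_int_power of_int_numeral)
    thus ?thesis unfolding Zhalf_def by blast
  qed
  have A: "nu2 (cab a b) = ereal (real_of_int (int (multiplicity (2::int) (int (n choose (2*a+1)))) + 1 - int n))"
    "multiplicity (2::int) (int (n choose (2*a+1))) < n"
    using nu2_cab[of a b] unfolding n_def by auto
  have B: "nu2 (cab (a+b) 0) = ereal (real_of_int (int (multiplicity (2::int) (int (n choose (2*(a+b)+1)))) + 1 - int n))"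
    using nu2_cab[of "a+b" 0] unfolding n_def by simp
  have C: "nu2 (cab 0 (a+b)) = ereal (real_of_int (int (multiplicity (2::int) (int (n choose 1))) + 1 - int n))"
    using nu2_cab[of 0 "a+b"] unfolding n_def by simp
  have n1: "n choose (2*(a+b)+1) = n"
  proof -
    have "n choose (2*(a+b)+1) = n choose (n - (2*(a+b)+1))"
      by (rule binomial_symmetric) (simp add: n_def)
    also have "n - (2*(a+b)+1) = 1" by (simp add: n_def)
    finally show ?thesis by simp
  qed
  have le: "multiplicity (2::int) (int n) \<le> multiplicity (2::int) (int (n choose (2*a+1)))"
    by (rule mult_le) (simp add: n_def)
  show ?thesis
    using z part2[of a b] A B C n1 le by simp
qed

end
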